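(* Let $L>0$, $D>0$, $\alpha\in(0,1]$, $\tau_{\rm acc}>0$, $\tau_{\rm m}>0$, $h_{\rm m}>0$, $\bar h_{\rm acc}>0$, $k>0$, and let $\tau_{\rm mix},\bar h_{\rm mix},\bar\rho,\bar v,c_1,\dots,c_5$ be as in the context. Consider the closed-loop system consisting of $$\tilde\rho_t+\bar v\tilde\rho_x+\bar\rho\tilde v_x=0,\qquad \tilde v_t-c_4\tilde v_x=-c_1\tilde\rho-c_2\tilde v-c_3\tilde h_{\rm acc}\quad (x\in[0,D],\,t\ge0),$$ $$\tilde\rho(0,t)+c_5\tilde v(0,t)=0,\qquad \tilde v_t(D,t)=-c_1\tilde\rho(D,t)-c_2\tilde v(D,t)-c_3\tilde h_{\rm acc}(D,t),$$ together with the control law $\tilde h_{\rm acc}(x,t)=\frac{1}{c_3}\left(-c_1\tilde\rho(x,t)+(k-c_2)\tilde v(x,t)\right)$. For all initial conditions $(\tilde\rho(\cdot,0),\tilde v(\cdot,0))\in C^1[0,D]\times C^1[0,D]$ which satisfy first-order compatibility with the boundary conditions, there exists a positive constant $\mu$ such that for all $t\ge0$ $$\|\tilde\rho(t)\|_{C^1}+\|\tilde v(t)\|_{C^1}\le\mu\left(\|\tilde\rho(0)\|_{C^1}+\|\tilde v(0)\|_{C^1}\right)e^{-\frac k2 t}.$$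
   Context: Definitions: $\tau_{\rm mix}=\left(\frac{\alpha}{\tau_{\rm acc}}+\frac{1-\alpha}{\tau_{\rm m}}\right)^{-1}$; $\bar h_{\rm mix}=\frac{\alpha+(1-\alpha)\frac{\tau_{\rm acc}}{\tau_{\rm m}}}{\alpha+(1-\alpha)\frac{\tau_{\rm acc}}{\tau_{\rm m}}\frac{\bar h_{\rm acc}}{h_{\rm m}}}\bar h_{\rm acc}$. Given a constant inflow $q_{\rm in}>0$ with $q_{\rm in}\bar h_{\rm mix}<1$, $\bar v=\frac{L}{\frac1{q_{\rm in}}-\bar h_{\rm mix}}$, $\bar\rho=q_{\rm in}/\bar v$ (so $\frac1{\bar\rho}-L=\bar h_{\rm mix}\bar v$, and $\bar\rho<1/L$). Constants: $c_1=\frac{1}{\bar\rho^2\tau_{\rm mix}\bar h_{\rm mix}}$, $c_2=\frac1{\tau_{\rm mix}}$, $c_3=\frac{\alpha}{\tau_{\rm acc}\bar h_{\rm acc}^2}\left(\frac1{\bar\rho}-L\right)$, $c_4=\frac{L}{\bar h_{\rm mix}}$, $c_5=\frac{\bar\rho}{\bar v}$. Norms: $\|u\|_{C^1}=\max_{[0,D]}|u|+\max_{[0,D]}|u'|$, and $\tilde\rho(t)=\tilde\rho(\cdot,t)$. First-order compatibility of the closed-loop system means: $\tilde\rho(0,0)+c_5\tilde v(0,0)=0$, the time-differentiated boundary condition at $x=0$ holds at $t=0$ when time derivatives are replaced via the closed-loop PDEs (i.e. $-\bar v\tilde\rho_x(0,0)-\bar\rho\tilde v_x(0,0)+c_5(c_4\tilde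 v_x(0,0)-k\tilde v(0,0))=0$), and the dynamic boundary condition at $x=D$ is consistent with the PDE at $t=0$ (i.e. $\tilde v_x(D,0)=0$). Here $\tilde\rho,\tilde v,\tilde h_{\rm acc}$ are deviations of traffic density, speed, and ACC time-gap from a uniform congested equilibrium $(\bar\rho,\bar v,\bar h_{\rm acc})$. *)

theory Defs
  imports "HOL-Analysis.Analysis"
begin

text \<open>Equilibrium quantities of the mixed ACC / manual traffic model.
  Parameters: L, alpha, tau_acc (ta), tau_m (tm), h_m (hm), bar h_acc (ha), q_in (q).\<close>

definition tau_mix :: "real \<Rightarrow> real \<Rightarrow> real \<Rightarrow> real" where
  "tau_mix \<alpha> ta tm = inverse (\<alpha> / ta + (1 - \<alpha>) / tm)"

definition h_mix :: "real \<Rightarrow> real \<Rightarrow> real \<Rightarrow> real \<Rightarrow> real \<Rightarrow> real" where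
  "h_mix \<alpha> ta tm hm ha =
     (\<alpha> + (1 - \<alpha>) * (ta / tm)) / (\<alpha> + (1 - \<alpha>) * (ta / tm) * (ha / hm)) * ha"

definition v_bar :: "real \<Rightarrow> real \<Rightarrow> real \<Rightarrow> real \<Rightarrow> real \<Rightarrow> real \<Rightarrow> real \<Rightarrow> real" where
  "v_bar L \<alpha> ta tm hm ha q = L / (1 / q - h_mix \<alpha> ta tm hm ha)"

definition rho_bar :: "real \<Rightarrow> real \<Rightarrow> real \<Rightarrow> real \<Rightarrow> real \<Rightarrow> real \<Rightarrow> real \<Rightarrow> real" where
  "rho_bar L \<alpha> ta tm hm ha q = q / v_bar L \<alpha> ta tm hm ha q"

definition cc1 :: "real \<Rightarrow> real \<Rightarrow> real \<Rightarrow> real \<Rightarrow> real \<Rightarrow> real \<Rightarrow> real \<Rightarrow> real" where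
  "cc1 L \<alpha> ta tm hm ha q =
     1 / ((rho_bar L \<alpha> ta tm hm ha q)\<^sup>2 * tau_mix \<alpha> ta tm * h_mix \<alpha> ta tm hm ha)"

definition cc2 :: "real \<Rightarrow> real \<Rightarrow> real \<Rightarrow> real" where
  "cc2 \<alpha> ta tm = 1 / tau_mix \<alpha> ta tm"

definition cc3 :: "real \<Rightarrow> real \<Rightarrow> real \<Rightarrow> real \<Rightarrow> real \<Rightarrow> real \<Rightarrow> real \<Rightarrow> real" where
  "cc3 L \<alpha> ta tm hm ha q =
     \<alpha> / (ta * ha\<^sup>2) * (1 / rho_bar L \<alpha> ta tm hm ha q - L)"

definition cc4 :: "real \<Rightarrow> real \<Rightarrow> real \<Rightarrow> real \<Rightarrow> real \<Rightarrow> real \<Rightarrow> real" where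
  "cc4 L \<alpha> ta tm hm ha = L / h_mix \<alpha> ta tm hm ha"

definition cc5 :: "real \<Rightarrow> real \<Rightarrow> real \<Rightarrow> real \<Rightarrow> real \<Rightarrow> real \<Rightarrow> real \<Rightarrow> real" where
  "cc5 L \<alpha> ta tm hm ha q = rho_bar L \<alpha> ta tm hm ha q / v_bar L \<alpha> ta tm hm ha q"

definition c1norm :: "real \<Rightarrow> (real \<Rightarrow> real) \<Rightarrow> (real \<Rightarrow> real) \<Rightarrow> real" where
  "c1norm D u u' = (SUP x\<in>{0..D}. \<bar>u x\<bar>) + (SUP x\<in>{0..D}. \<bar>u' x\<bar>)"

end

theory Submission
  imports Defs
begin


lemma line_deriv:
  fixes f fx ft :: "real \<Rightarrow> real \<Rightarrow> real"
  assumes dx: "\<And>x t. x \<in> {0..D} \<Longrightarrow> t \<ge> 0 \<Longrightarrow> ((\<lambda>y. f y t) has_real_derivative fx x t) (at x within {0..D})"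
  and dt: "\<And>x t. x \<in> {0..D} \<Longrightarrow> t \<ge> 0 \<Longrightarrow> ((\<lambda>s. f x s) has_real_derivative ft x t) (at t within {0..})"
  and ct: "continuous_on ({0..D} \<times> {0..}) (\<lambda>(x,t). ft x t)"
  and S: "\<And>s. s \<in> S \<Longrightarrow> (x0 + c * s) \<in> {0..D} \<and> (s + h) \<ge> 0" and sig: "\<sigma> \<in> S"
  shows "((\<lambda>s. f (x0 + c * s) (s + h)) has_real_derivative
           (c * fx (x0+c * \<sigma>) (\<sigma>+h) + ft (x0+c * \<sigma>) (\<sigma>+h))) (at \<sigma> within S)"
proof -
  define X where "X = x0 + c * \<sigma>"
  define Y where "Y = \<sigma> + h"
  have XY: "X \<in> {0..D}" "Y \<in> {0..}" using S[OF sig] by (auto simp: X_def Y_def)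
  have F: "((\<lambda>(x,y). f x y) has_derivative (\<lambda>(tx,ty). tx * fx X Y + blinfun_scaleR_left (ft X Y) ty))
      (at (X,Y) within {0..D} \<times> {0..})"
  proof (rule has_derivative_partialsI)
    show "((\<lambda>x. f x Y) has_derivative (\<lambda>tx. tx * fx X Y)) (at X within {0..D})"
      using dx[of X Y] XY by (simp add: has_field_derivative_def mult.commute[of _ "fx X Y"])
    show "((\<lambda>y. f x y) has_derivative blinfun_apply (blinfun_scaleR_left (ft x y))) (at y within {0..})"
      if "x \<in> {0..D}" "y \<in> {0..}" for x y
      using dt[of x y] that by (simp add: has_field_derivative_def mult.commute[of _ "ft x y"])
    have "continuous_on ({0..D} \<times> {0..}) (\<lambda>(x,y). blinfun_scaleR_left (ft x y))"
      using ct by (auto simp: split_beta intro!: continuous_intros)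
    then show "continuous (at (X, Y) within {0..D} \<times> {0..}) (\<lambda>(x, y). blinfun_scaleR_left (ft x y))"
      using XY continuous_on_eq_continuous_within by blast
  qed (use XY in auto)
  have P: "((\<lambda>s. (x0 + c * s, s + h)) has_derivative (\<lambda>d. (c*d, d))) (at \<sigma> within S)"
    by (auto intro!: derivative_eq_intros)
  have F': "((\<lambda>(x,y). f x y) has_derivative (\<lambda>(tx,ty). tx * fx X Y + blinfun_scaleR_left (ft X Y) ty))
      (at ((\<lambda>s. (x0 + c * s, s + h)) \<sigma>) within (\<lambda>s. (x0 + c * s, s + h)) ` S)"
  proof -
    have "(\<lambda>s. (x0 + c * s, s + h)) ` S \<subseteq> {0..D} \<times> {0..}" using S by auto
    from has_derivative_subset[OF F this] show ?thesis by (simp add: X_def Y_def)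
  qed
  have "((\<lambda>(x,y). f x y) \<circ> (\<lambda>s. (x0 + c * s, s + h)) has_derivative
        (\<lambda>(tx,ty). tx * fx X Y + blinfun_scaleR_left (ft X Y) ty) \<circ> (\<lambda>d. (c*d, d))) (at \<sigma> within S)"
    by (rule diff_chain_within[OF P F'])
  moreover have "(\<lambda>(tx,ty). tx * fx X Y + blinfun_scaleR_left (ft X Y) ty) \<circ> (\<lambda>d. (c*d, d))
      = (*) (c * fx X Y + ft X Y)"
    by (auto simp: fun_eq_iff algebra_simps)
  ultimately show ?thesis by (simp add: has_field_derivative_def o_def X_def Y_def)
qed

lemma deriv_le_lip:
  fixes f :: "real \<Rightarrow> real"
  assumes d: "(f has_real_derivative d) (at x within S)" and nb: "at x within S \<noteq> bot"
    and L: "\<And>y. y \<in> S \<Longrightarrow> \<bar>f y - f x\<bar> \<le> M * \<bar>y - x\<bar>"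
  shows "\<bar>d\<bar> \<le> M"
proof -
  have "((\<lambda>y. \<bar>(f y - f x) / (y - x)\<bar>) \<longlongrightarrow> \<bar>d\<bar>) (at x within S)"
    using d unfolding has_field_derivative_iff by (rule tendsto_rabs)
  moreover have "eventually (\<lambda>y. \<bar>(f y - f x) / (y - x)\<bar> \<le> M) (at x within S)"
    unfolding eventually_at_filter
  proof (intro always_eventually allI impI)
    fix y assume "y \<noteq> x" "y \<in> S"
    then show "\<bar>(f y - f x) / (y - x)\<bar> \<le> M" using L[of y]
      by (simp add: abs_divide divide_le_eq)
  qed
  ultimately show ?thesis using nb by (rule tendsto_upperbound)
qed

lemma nb_Icc: "(D::real) > 0 \<Longrightarrow> x \<in> {0..D} \<Longrightarrow> at x within {0..D} \<noteq> bot"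
  by (subst trivial_limit_within) (metis islimpt_Icc)

lemma nb_Ici: "at (t::real) within {t..} \<noteq> bot"
  by (simp add: at_within_Ici_at_right)

lemma transport_bound:
  fixes f g :: "real \<Rightarrow> real \<Rightarrow> real" and vb D k B G I x t :: real
  assumes vb: "vb > 0" and D: "D > 0" and k: "k > 0" and nn: "B \<ge> 0" "G \<ge> 0" "I \<ge> 0"
  and char: "\<And>x t \<sigma>. x \<in> {0..D} \<Longrightarrow> t \<ge> 0 \<Longrightarrow> \<sigma> \<in> {max 0 (t - x/vb)..t} \<Longrightarrow>
      ((\<lambda>s. f (x - vb*t + vb * s) s) has_real_derivative g (x - vb*t + vb*\<sigma>) \<sigma>) (at \<sigma> within {max 0 (t - x/vb)..t})"
  and gb: "\<And>y \<sigma>. y \<in> {0..D} \<Longrightarrow> \<sigma> \<ge> 0 \<Longrightarrow> \<bar>g y \<sigma>\<bar> \<le> G * exp(-k*\<sigma>)"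
  and bb: "\<And>\<sigma>. \<sigma> \<ge> 0 \<Longrightarrow> \<bar>f 0 \<sigma>\<bar> \<le> B * exp(-k*\<sigma>)"
  and ib: "\<And>y. y \<in> {0..D} \<Longrightarrow> \<bar>f y 0\<bar> \<le> I"
  and x: "x \<in> {0..D}" and t: "t \<ge> 0"
  shows "\<bar>f x t\<bar> \<le> (I + B + G*D/vb) * exp(k*D/vb) * exp(-k*t)"
proof -
  define s0 where "s0 = max 0 (t - x/vb)"
  have xD: "0 \<le> x" "x \<le> D" using x by auto
  have xv0: "x/vb \<ge> 0" using xD vb by simp
  have s0: "0 \<le> s0" "s0 \<le> t" "t - s0 \<le> x/vb" unfolding s0_def using t xv0 by linarith+
  have xvb: "x/vb \<le> D/vb" using divide_right_mono[OF xD(2)] vb by simp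
  have pos: "x - vb*t + vb*\<sigma> \<in> {0..D}" if "\<sigma> \<in> {s0..t}" for \<sigma>
  proof -
    have "\<sigma> \<ge> t - x/vb" using that by (auto simp: s0_def)
    then have "vb*\<sigma> \<ge> vb*t - x" using vb by (simp add: field_simps)
    moreover have "vb*\<sigma> \<le> vb*t" using that vb by auto
    ultimately show ?thesis using xD by auto
  qed
  have est: "\<bar>f (x - vb*t + vb*t) t - f (x - vb*t + vb * s0) s0\<bar> \<le> G*exp(-k * s0) * \<bar>t - s0\<bar>"
  proof -
    have "norm (f (x - vb*t + vb*t) t - f (x - vb*t + vb * s0) s0) \<le> G*exp(-k * s0) * norm (t - s0)"
    proof (rule field_differentiable_bound[of "{s0..t}" "\<lambda>s. f (x - vb*t + vb * s) s" "\<lambda>\<sigma>. g (x - vb*t + vb*\<sigma>) \<sigma>"])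
      show "((\<lambda>s. f (x - vb*t + vb * s) s) has_field_derivative g (x - vb*t + vb*z) z) (at z within {s0..t})"
        if "z \<in> {s0..t}" for z using char[OF x t, of z] that by (simp add: s0_def)
      show "norm (g (x - vb*t + vb*z) z) \<le> G * exp (- k * s0)" if "z \<in> {s0..t}" for z
      proof -
        have "\<bar>g (x - vb*t + vb*z) z\<bar> \<le> G * exp(-k*z)" using gb[OF pos[OF that]] that s0 by auto
        also have "\<dots> \<le> G * exp(-k * s0)" using that k nn by (intro mult_left_mono) auto
        finally show ?thesis by simp
      qed
    qed (use s0 in auto)
    then show ?thesis by simp
  qed
  have E: "exp(-k * s0) \<le> exp(k*D/vb) * exp(-k*t)"
  proof -
    have ts: "t - s0 \<le> D/vb" using s0(3) xvb by linarith
    have "k*(t - s0) \<le> k*(D/vb)" by (rule mult_left_mono[OF ts]) (use k in simp)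
    moreover have "k*(t-s0) = k*t - k * s0" by (simp add: right_diff_distrib)
    moreover have "k*(D/vb) = k*D/vb" by simp
    ultimately have "-k * s0 \<le> k*D/vb + -k*t" by linarith
    then have "exp(-k * s0) \<le> exp(k*D/vb + -k*t)" by (simp only: exp_le_cancel_iff)
    then show ?thesis by (simp only: exp_add)
  qed
  have E1: "1 \<le> exp(k*D/vb) * exp(-k*t)" if "t \<le> D/vb"
  proof -
    have "k*t \<le> k*(D/vb)" by (rule mult_left_mono[OF that]) (use k in simp)
    moreover have "k*(D/vb) = k*D/vb" by simp
    ultimately have "0 \<le> k*D/vb + -k*t" by linarith
    then have "1 \<le> exp(k*D/vb + -k*t)" by simp
    then show ?thesis by (simp only: exp_add)
  qed
  have Gt: "G*exp(-k * s0) * \<bar>t - s0\<bar> \<le> G*D/vb * (exp(k*D/vb) * exp(-k*t))"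
  proof -
    have "G*exp(-k * s0) * \<bar>t - s0\<bar> \<le> G * (exp(k*D/vb) * exp(-k*t)) * (D/vb)"
      using s0 xvb E nn by (intro mult_mono) auto
    then show ?thesis by (simp add: algebra_simps)
  qed
  define EE where "EE = exp(k*D/vb) * exp(-k*t)"
  have EE0: "EE \<ge> 0" by (simp add: EE_def)
  have xx: "x - vb*t + vb*t = x" by simp
  show ?thesis
  proof (cases "t \<le> x/vb")
    case True
    then have "s0 = 0" by (simp add: s0_def)
    then have "\<bar>f x t - f (x - vb*t + vb*0) 0\<bar> \<le> G*D/vb * EE"
      using est Gt xx unfolding EE_def by simp
    moreover have "\<bar>f (x - vb*t + vb*0) 0\<bar> \<le> I" using ib pos[of 0] s0 \<open>s0 = 0\<close> by simp
    ultimately have "\<bar>f x t\<bar> \<le> I + G*D/vb * EE" by linarith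
    moreover have "1 \<le> EE" unfolding EE_def using E1 True xvb by linarith
    then have "I \<le> I * EE" using nn mult_left_mono[of 1 EE I] by simp
    moreover have "0 \<le> B * EE" using nn EE0 by simp
    ultimately have "\<bar>f x t\<bar> \<le> I * EE + B * EE + G*D/vb * EE" by linarith
    then show ?thesis unfolding EE_def by (simp add: algebra_simps)
  next
    case False
    then have "s0 = t - x/vb" by (simp add: s0_def)
    then have z: "x - vb*t + vb * s0 = 0" using vb by (simp add: field_simps)
    have "\<bar>f x t - f 0 s0\<bar> \<le> G*D/vb * EE"
      using est Gt xx z unfolding EE_def by simp
    moreover have "\<bar>f 0 s0\<bar> \<le> B * EE"
      using bb[OF s0(1)] E nn mult_left_mono[of "exp(-k * s0)" EE B] unfolding EE_def by linarith
    moreover have "0 \<le> I * EE" using nn EE0 by simp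
    ultimately have "\<bar>f x t\<bar> \<le> I * EE + B * EE + G*D/vb * EE" by linarith
    then show ?thesis unfolding EE_def by (simp add: algebra_simps)
  qed
qed

lemma bdd_abs: "continuous_on {a..b} (f::real\<Rightarrow>real) \<Longrightarrow> bdd_above ((\<lambda>x. \<bar>f x\<bar>) ` {a..b})"
  by (intro bounded_imp_bdd_above compact_imp_bounded compact_continuous_image continuous_intros) auto

lemma lip_on:
  fixes f f' :: "real \<Rightarrow> real"
  assumes "\<And>z. z \<in> {a..b} \<Longrightarrow> (f has_real_derivative f' z) (at z within {a..b})"
    and "\<And>z. z \<in> {a..b} \<Longrightarrow> \<bar>f' z\<bar> \<le> M" and "x \<in> {a..b}" "y \<in> {a..b}"
  shows "\<bar>f x - f y\<bar> \<le> M * \<bar>x - y\<bar>"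
  using field_differentiable_bound[of "{a..b}" f f' M x y] assms by auto

lemma mvt_abs:
  fixes f f' :: "real \<Rightarrow> real"
  assumes "a \<le> b" "\<And>z. z \<in> {a..b} \<Longrightarrow> (f has_real_derivative f' z) (at z within {a..b})"
    and "\<And>z. z \<in> {a..b} \<Longrightarrow> \<bar>f' z\<bar> \<le> M"
  shows "\<bar>f b - f a\<bar> \<le> M * (b - a)"
  using lip_on[of a b f f' M b a] assms by auto

lemma char_pos:
  fixes x t s vb D :: real
  assumes "x \<in> {0..D}" "vb > 0" "s \<in> {max 0 (t - x/vb)..t}"
  shows "x - vb*t + vb * s \<in> {0..D} \<and> s \<ge> 0"
proof -
  have "s \<ge> t - x/vb" using assms by auto
  then have "vb * s \<ge> vb*t - x" using assms(2) by (simp add: field_simps)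
  moreover have "vb * s \<le> vb*t" using assms by auto
  moreover have "s \<ge> 0" using assms by auto
  moreover have "0 \<le> x" "x \<le> D" using assms(1) by auto
  ultimately have "0 \<le> x - vb*t + vb * s" "x - vb*t + vb * s \<le> D" "s \<ge> 0" by linarith+
  then show ?thesis by simp
qed



theorem theorem1:
  fixes L D \<alpha> ta tm hm ha k q :: real
    and \<rho> v \<rho>x \<rho>t vx vt h :: "real \<Rightarrow> real \<Rightarrow> real"
  defines "vb \<equiv> v_bar L \<alpha> ta tm hm ha q"
    and "rb \<equiv> rho_bar L \<alpha> ta tm hm ha q"
    and "c1 \<equiv> cc1 L \<alpha> ta tm hm ha q"
    and "c2 \<equiv> cc2 \<alpha> ta tm"
    and "c3 \<equiv> cc3 L \<alpha> ta tm hm ha q"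
    and "c4 \<equiv> cc4 L \<alpha> ta tm hm ha"
    and "c5 \<equiv> cc5 L \<alpha> ta tm hm ha q"
  assumes "L > 0" and "D > 0" and "0 < \<alpha>" and "\<alpha> \<le> 1"
    and "ta > 0" and "tm > 0" and "hm > 0" and "ha > 0" and "k > 0"
    and "q > 0" and "q * h_mix \<alpha> ta tm hm ha < 1"
    \<comment> \<open>classical C^1 solution on [0,D] x [0,oo): partial derivatives exist and are continuous\<close>
    and drx: "\<And>x t. x \<in> {0..D} \<Longrightarrow> t \<ge> 0 \<Longrightarrow>
               ((\<lambda>y. \<rho> y t) has_real_derivative \<rho>x x t) (at x within {0..D})"
    and drt: "\<And>x t. x \<in> {0..D} \<Longrightarrow> t \<ge> 0 \<Longrightarrow>
               ((\<lambda>s. \<rho> x s) has_real_derivative \<rho>t x t) (at t within {0..})"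
    and dvx: "\<And>x t. x \<in> {0..D} \<Longrightarrow> t \<ge> 0 \<Longrightarrow>
               ((\<lambda>y. v y t) has_real_derivative vx x t) (at x within {0..D})"
    and dvt: "\<And>x t. x \<in> {0..D} \<Longrightarrow> t \<ge> 0 \<Longrightarrow>
               ((\<lambda>s. v x s) has_real_derivative vt x t) (at t within {0..})"
    and cont: "continuous_on ({0..D} \<times> {0..}) (\<lambda>(x,t). \<rho>x x t)"
              "continuous_on ({0..D} \<times> {0..}) (\<lambda>(x,t). \<rho>t x t)"
              "continuous_on ({0..D} \<times> {0..}) (\<lambda>(x,t). vx x t)"
              "continuous_on ({0..D} \<times> {0..}) (\<lambda>(x,t). vt x t)"
    \<comment> \<open>control law\<close>
    and ctrl: "\<And>x t. h x t = (1 / c3) * (- c1 * \<rho> x t + (k - c2) * v x t)"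
    \<comment> \<open>PDEs\<close>
    and pde1: "\<And>x t. x \<in> {0..D} \<Longrightarrow> t \<ge> 0 \<Longrightarrow>
               \<rho>t x t + vb * \<rho>x x t + rb * vx x t = 0"
    and pde2: "\<And>x t. x \<in> {0..D} \<Longrightarrow> t \<ge> 0 \<Longrightarrow>
               vt x t - c4 * vx x t = - c1 * \<rho> x t - c2 * v x t - c3 * h x t"
    \<comment> \<open>boundary conditions\<close>
    and bc0: "\<And>t. t \<ge> 0 \<Longrightarrow> \<rho> 0 t + c5 * v 0 t = 0"
    and bcD: "\<And>t. t \<ge> 0 \<Longrightarrow> vt D t = - c1 * \<rho> D t - c2 * v D t - c3 * h D t"
    \<comment> \<open>first-order compatibility of the initial data\<close>
    and comp0: "\<rho> 0 0 + c5 * v 0 0 = 0"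
    and comp1: "- vb * \<rho>x 0 0 - rb * vx 0 0 + c5 * (c4 * vx 0 0 - k * v 0 0) = 0"
    and comp2: "vx D 0 = 0"
  shows "\<exists>\<mu> > 0. \<forall>t \<ge> 0.
           c1norm D (\<lambda>x. \<rho> x t) (\<lambda>x. \<rho>x x t) + c1norm D (\<lambda>x. v x t) (\<lambda>x. vx x t)
           \<le> \<mu> * (c1norm D (\<lambda>x. \<rho> x 0) (\<lambda>x. \<rho>x x 0) + c1norm D (\<lambda>x. v x 0) (\<lambda>x. vx x 0))
               * exp (- (k / 2) * t)"
proof -
  have k0: "k > 0" using \<open>k > 0\<close> .
  define hmx where "hmx = h_mix \<alpha> ta tm hm ha"
  have hmx: "hmx > 0"
  proof -
    have "ta/tm > 0" "ha/hm > 0" using assms by auto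
    moreover have "1 - \<alpha> \<ge> 0" using assms by auto
    ultimately have n: "\<alpha> + (1 - \<alpha>) * (ta/tm) > 0" and d: "\<alpha> + (1 - \<alpha>) * (ta/tm) * (ha/hm) > 0"
      using assms by (auto intro!: add_pos_nonneg mult_nonneg_nonneg)
    show ?thesis unfolding hmx_def h_mix_def using n d assms by simp
  qed
  have dpos: "1/q - hmx > 0"
  proof -
    have "q * hmx < 1" using assms by (simp add: hmx_def)
    then have "hmx < 1/q" using assms by (simp add: field_simps)
    then show ?thesis by simp
  qed
  have vb: "vb > 0" unfolding vb_def v_bar_def using dpos assms by (simp add: hmx_def)
  have vbe: "vb * (1/q - hmx) = L" unfolding vb_def v_bar_def using dpos by (simp add: hmx_def)
  have rbe: "rb = q / vb" by (simp add: rb_def vb_def rho_bar_def)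
  have rb: "rb > 0" using rbe vb assms by simp
  have c5e: "c5 = rb / vb" by (simp add: c5_def rb_def vb_def cc5_def)
  have c5: "c5 > 0" using c5e rb vb by simp
  have c4: "c4 > 0" unfolding c4_def cc4_def using hmx assms by (simp add: hmx_def)
  have c3e: "c3 = \<alpha> / (ta * ha\<^sup>2) * (1 / rb - L)" by (simp add: c3_def rb_def cc3_def)
  have "1/rb - L = vb * hmx"
  proof -
    have "1/rb = vb/q" using rbe by simp
    also have "\<dots> = vb * (1/q)" by simp
    finally show ?thesis using vbe by (simp add: algebra_simps)
  qed
  then have c3: "c3 > 0" unfolding c3e using vb hmx assms by simp
  have V1: "vt x t = c4 * vx x t - k * v x t" if "x \<in> {0..D}" "t \<ge> 0" for x t
  proof -
    have "c3 * h x t = - c1 * \<rho> x t + (k - c2) * v x t" using ctrl[of x t] c3 by simp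
    then show ?thesis using pde2[OF that] by (simp add: algebra_simps)
  qed
  have V2: "vt D t = - k * v D t" if "t \<ge> 0" for t
  proof -
    have "c3 * h D t = - c1 * \<rho> D t + (k - c2) * v D t" using ctrl[of D t] c3 by simp
    then show ?thesis using bcD[OF that] by (simp add: algebra_simps)
  qed
  have cv0: "continuous_on {0..D} (\<lambda>y. v y 0)"
    unfolding continuous_on_eq_continuous_within using dvx DERIV_continuous by fastforce
  have cr0: "continuous_on {0..D} (\<lambda>y. \<rho> y 0)"
    unfolding continuous_on_eq_continuous_within using drx DERIV_continuous by fastforce
  have cvx0: "continuous_on {0..D} (\<lambda>y. vx y 0)"
  proof -
    have "continuous_on {0..D} ((\<lambda>(x,t). vx x t) \<circ> (\<lambda>y. (y, 0::real)))"
      by (rule continuous_on_compose) (auto intro!: continuous_intros intro: continuous_on_subset[OF cont(3)])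
    then show ?thesis by (simp add: o_def)
  qed
  have crx0: "continuous_on {0..D} (\<lambda>y. \<rho>x y 0)"
  proof -
    have "continuous_on {0..D} ((\<lambda>(x,t). \<rho>x x t) \<circ> (\<lambda>y. (y, 0::real)))"
      by (rule continuous_on_compose) (auto intro!: continuous_intros intro: continuous_on_subset[OF cont(1)])
    then show ?thesis by (simp add: o_def)
  qed
  define W where "W = (SUP y\<in>{0..D}. \<bar>v y 0\<bar>)"
  define W1 where "W1 = (SUP y\<in>{0..D}. \<bar>vx y 0\<bar>)"
  define R where "R = (SUP y\<in>{0..D}. \<bar>\<rho> y 0\<bar>)"
  define R1 where "R1 = (SUP y\<in>{0..D}. \<bar>\<rho>x y 0\<bar>)"
  have Wb: "\<bar>v y 0\<bar> \<le> W" if "y \<in> {0..D}" for y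
    unfolding W_def by (rule cSUP_upper[OF that bdd_abs[OF cv0]])
  have W1b: "\<bar>vx y 0\<bar> \<le> W1" if "y \<in> {0..D}" for y
    unfolding W1_def by (rule cSUP_upper[OF that bdd_abs[OF cvx0]])
  have Rb: "\<bar>\<rho> y 0\<bar> \<le> R" if "y \<in> {0..D}" for y
    unfolding R_def by (rule cSUP_upper[OF that bdd_abs[OF cr0]])
  have R1b: "\<bar>\<rho>x y 0\<bar> \<le> R1" if "y \<in> {0..D}" for y
    unfolding R1_def by (rule cSUP_upper[OF that bdd_abs[OF crx0]])
  have D0: "(0::real) \<in> {0..D}" using assms by simp
  have nn: "W \<ge> 0" "W1 \<ge> 0" "R \<ge> 0" "R1 \<ge> 0"
    using Wb[OF D0] W1b[OF D0] Rb[OF D0] R1b[OF D0] by linarith+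
  have N0: "c1norm D (\<lambda>x. \<rho> x 0) (\<lambda>x. \<rho>x x 0) + c1norm D (\<lambda>x. v x 0) (\<lambda>x. vx x 0) = R + R1 + (W + W1)"
    by (simp add: c1norm_def W_def W1_def R_def R1_def)
  have wlip: "\<bar>v a 0 - v b 0\<bar> \<le> W1 * \<bar>a - b\<bar>" if "a \<in> {0..D}" "b \<in> {0..D}" for a b
    using lip_on[of 0 D "\<lambda>y. v y 0" "\<lambda>y. vx y 0" W1 a b] dvx W1b that by auto
  have vform: "v y t = exp(-k*t) * v (min (y + c4*t) D) 0" if y: "y \<in> {0..D}" and t: "t \<ge> 0" for y t
  proof -
    have ld: "((\<lambda>s. exp (k * s) * v (x0 + (-c4) * s) (s + 0)) has_real_derivative 0) (at \<sigma> within S)"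
      if S: "\<And>s. s \<in> S \<Longrightarrow> (x0 + (-c4) * s) \<in> {0..D} \<and> (s + 0) \<ge> 0" and sig: "\<sigma> \<in> S" for x0 S \<sigma>
    proof -
      have l: "((\<lambda>s. v (x0 + (-c4) * s) (s + 0)) has_real_derivative
           ((-c4) * vx (x0+(-c4) * \<sigma>) (\<sigma>+0) + vt (x0+(-c4) * \<sigma>) (\<sigma>+0))) (at \<sigma> within S)"
        by (rule line_deriv[OF dvx dvt cont(4) S sig])
      have e: "((\<lambda>s. exp (k * s)) has_real_derivative exp (k * \<sigma>) * k) (at \<sigma> within S)"
        by (auto intro!: derivative_eq_intros)
      have V: "vt (x0+(-c4) * \<sigma>) (\<sigma>+0) = c4 * vx (x0+(-c4) * \<sigma>) (\<sigma>+0) - k * v (x0+(-c4) * \<sigma>) (\<sigma>+0)"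
        using V1 S[OF sig] by simp
      have eq0: "exp (k * \<sigma>) * k * v (x0+(-c4) * \<sigma>) (\<sigma>+0) + ((-c4) * vx (x0+(-c4) * \<sigma>) (\<sigma>+0) + vt (x0+(-c4) * \<sigma>) (\<sigma>+0)) * exp (k * \<sigma>) = 0"
        unfolding V by (simp add: algebra_simps)
      show ?thesis using DERIV_mult[OF e l] unfolding eq0 .
    qed
    show ?thesis
    proof (cases "y + c4*t \<le> D")
      case True
      have "\<bar>exp (k * t) * v (y + c4*t + (-c4) * t) (t + 0) - exp (k * 0) * v (y + c4*t + (-c4) * 0) (0 + 0)\<bar> \<le> 0 * (t - 0)"
      proof (rule mvt_abs[OF t])
        fix z assume z: "z \<in> {0..t}"
        show "((\<lambda>s. exp (k * s) * v (y + c4*t + (-c4) * s) (s + 0)) has_real_derivative 0) (at z within {0..t})"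
        proof (rule ld[OF _ z])
          fix s assume s: "s \<in> {0..t}"
          have "c4 * s \<le> c4 * t" using s c4 by (simp add: mult_left_mono)
          moreover have "c4 * s \<ge> 0" using s c4 by simp
          ultimately show "(y + c4*t + (-c4) * s) \<in> {0..D} \<and> (s + 0) \<ge> 0" using s y True by auto
        qed
      qed simp
      then have "exp (k * t) * v y t = v (y + c4*t) 0" by simp
      moreover have "min (y + c4*t) D = y + c4*t" using True by simp
      ultimately show ?thesis by (simp add: exp_minus field_simps)
    next
      case False
      define s0 where "s0 = t - (D - y)/c4"
      have s0: "0 < s0" "s0 \<le> t"
      proof -
        have "(D - y)/c4 < t" using False c4 by (simp add: field_simps)
        then show "0 < s0" by (simp add: s0_def)
        show "s0 \<le> t" using y c4 by (simp add: s0_def)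
      qed
      have pD: "y + c4*t + (-c4) * s0 = D" using c4 by (simp add: s0_def field_simps)
      have "\<bar>exp (k * t) * v (y + c4*t + (-c4) * t) (t + 0) - exp (k * s0) * v (y + c4*t + (-c4) * s0) (s0 + 0)\<bar> \<le> 0 * (t - s0)"
      proof (rule mvt_abs[OF s0(2)])
        fix z assume z: "z \<in> {s0..t}"
        show "((\<lambda>s. exp (k * s) * v (y + c4*t + (-c4) * s) (s + 0)) has_real_derivative 0) (at z within {s0..t})"
        proof (rule ld[OF _ z])
          fix s assume s: "s \<in> {s0..t}"
          have "c4 * s \<le> c4 * t" using s c4 by (simp add: mult_left_mono)
          moreover have "c4 * s \<ge> c4 * s0" using s c4 by (simp add: mult_left_mono)
          moreover have "c4 * s0 = c4 * t - (D - y)" using c4 by (simp add: s0_def field_simps)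
          ultimately show "(y + c4*t + (-c4) * s) \<in> {0..D} \<and> (s + 0) \<ge> 0" using s s0 y by auto
        qed
      qed simp
      then have 1: "exp (k * t) * v y t = exp (k * s0) * v D s0" using pD by simp
      have "\<bar>exp (k * s0) * v D s0 - exp (k * 0) * v D 0\<bar> \<le> 0 * (s0 - 0)"
      proof (rule mvt_abs)
        fix z assume z: "z \<in> {0..s0}"
        have l: "((\<lambda>s. v D s) has_real_derivative vt D z) (at z within {0..s0})"
          by (rule DERIV_subset[OF dvt]) (use z assms in auto)
        have e: "((\<lambda>s. exp (k * s)) has_real_derivative exp (k * z) * k) (at z within {0..s0})"
          by (auto intro!: derivative_eq_intros)
        show "((\<lambda>s. exp (k * s) * v D s) has_real_derivative 0) (at z within {0..s0})"
          using DERIV_mult[OF e l] V2[of z] z by (simp add: algebra_simps)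
      qed (use s0 in auto)
      then have "exp (k * t) * v y t = v D 0" using 1 by simp
      moreover have "min (y + c4*t) D = D" using False by simp
      ultimately show ?thesis by (simp add: exp_minus field_simps)
    qed
  qed
  have minlip: "\<bar>min a D - min b D\<bar> \<le> \<bar>a - b\<bar>" for a b :: real
    by (simp add: min_def abs_if)
  have mdom: "min (y + c4*t) D \<in> {0..D}" if "y \<in> {0..D}" "t \<ge> 0" for y t
    using that c4 assms by auto
  have Dp: "D > 0" using assms by simp
  have vbound: "\<bar>v y t\<bar> \<le> W * exp(-k*t)" if "y \<in> {0..D}" "t \<ge> 0" for y t
  proof -
    have "\<bar>v y t\<bar> = exp(-k*t) * \<bar>v (min (y + c4*t) D) 0\<bar>" using vform[OF that] by (simp add: abs_mult)
    also have "\<dots> \<le> exp(-k*t) * W" using Wb[OF mdom[OF that]] by (simp add: mult_left_mono)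
    finally show ?thesis by (simp add: mult.commute)
  qed
  have vlip: "\<bar>v y' t - v y t\<bar> \<le> (W1 * exp(-k*t)) * \<bar>y' - y\<bar>"
    if "y \<in> {0..D}" "y' \<in> {0..D}" "t \<ge> 0" for y y' t
  proof -
    have "\<bar>v y' t - v y t\<bar> = exp(-k*t) * \<bar>v (min (y' + c4*t) D) 0 - v (min (y + c4*t) D) 0\<bar>"
      using vform[OF that(1,3)] vform[OF that(2,3)] by (simp add: abs_mult right_diff_distrib[symmetric])
    also have "\<dots> \<le> exp(-k*t) * (W1 * \<bar>min (y' + c4*t) D - min (y + c4*t) D\<bar>)"
      using wlip[OF mdom[OF that(2,3)] mdom[OF that(1,3)]] by (simp add: mult_left_mono)
    also have "\<dots> \<le> exp(-k*t) * (W1 * \<bar>y' - y\<bar>)"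
      using minlip[of "y' + c4*t" "y + c4*t"] nn by (simp add: mult_left_mono)
    finally show ?thesis by (simp add: algebra_simps)
  qed
  have vxb: "\<bar>vx y t\<bar> \<le> W1 * exp(-k*t)" if "y \<in> {0..D}" "t \<ge> 0" for y t
    by (rule deriv_le_lip[OF dvx[OF that] nb_Icc[OF Dp that(1)]]) (use vlip that in auto)
  define Vt where "Vt = c4 * W1 + k * W"
  have Vt0: "Vt \<ge> 0" using nn c4 k0 by (simp add: Vt_def)
  have vtb: "\<bar>vt y t\<bar> \<le> Vt * exp(-k*t)" if "y \<in> {0..D}" "t \<ge> 0" for y t
  proof -
    have "\<bar>vt y t\<bar> \<le> \<bar>c4 * vx y t\<bar> + \<bar>k * v y t\<bar>" unfolding V1[OF that] by (rule abs_triangle_ineq4)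
    also have "\<dots> = c4 * \<bar>vx y t\<bar> + k * \<bar>v y t\<bar>" using c4 k0 by (simp add: abs_mult)
    also have "\<dots> \<le> c4 * (W1 * exp(-k*t)) + k * (W * exp(-k*t))"
      using vxb[OF that] vbound[OF that] c4 k0 by (intro add_mono mult_left_mono) auto
    finally show ?thesis by (simp add: Vt_def algebra_simps)
  qed
  have vtd: "\<bar>v y (t+h) - v y t\<bar> \<le> Vt * exp(-k*t) * h" if "y \<in> {0..D}" "t \<ge> 0" "h \<ge> 0" for y t h
  proof -
    have "\<bar>v y (t+h) - v y t\<bar> \<le> Vt * exp(-k*t) * (t + h - t)"
    proof (rule mvt_abs)
      fix z assume z: "z \<in> {t..t+h}"
      show "((\<lambda>s. v y s) has_real_derivative vt y z) (at z within {t..t+h})"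
        by (rule DERIV_subset[OF dvt]) (use z that in auto)
      have "\<bar>vt y z\<bar> \<le> Vt * exp(-k*z)" using vtb[of y z] z that by auto
      also have "\<dots> \<le> Vt * exp(-k*t)" using z Vt0 k0 by (intro mult_left_mono) auto
      finally show "\<bar>vt y z\<bar> \<le> Vt * exp(-k*t)" .
    qed (use that in auto)
    then show ?thesis by simp
  qed
  define a where "a = rb / (c4 + vb)"
  have a0: "a > 0" using rb c4 vb by (simp add: a_def)
  have aeq: "rb = a * (c4 + vb)" using c4 vb by (simp add: a_def)
  define z where "z = (\<lambda>x t. \<rho> x t + a * v x t)"
  have zchar: "((\<lambda>s. z (x0 + vb * s) (s + h)) has_real_derivative (- a * k * v (x0 + vb * \<sigma>) (\<sigma> + h))) (at \<sigma> within S)"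
    if S: "\<And>s. s \<in> S \<Longrightarrow> (x0 + vb * s) \<in> {0..D} \<and> (s + h) \<ge> 0" and sig: "\<sigma> \<in> S" for S x0 h \<sigma>
  proof -
    note lr = line_deriv[OF drx drt cont(2) S sig]
    note lv = line_deriv[OF dvx dvt cont(4) S sig]
    have P: "x0 + vb * \<sigma> \<in> {0..D}" "\<sigma> + h \<ge> 0" using S[OF sig] by auto
    have e1: "\<rho>t (x0 + vb * \<sigma>) (\<sigma> + h) = - vb * \<rho>x (x0 + vb * \<sigma>) (\<sigma> + h) - rb * vx (x0 + vb * \<sigma>) (\<sigma> + h)"
      using pde1[OF P] by (simp add: algebra_simps)
    have e2: "vt (x0 + vb * \<sigma>) (\<sigma> + h) = c4 * vx (x0 + vb * \<sigma>) (\<sigma> + h) - k * v (x0 + vb * \<sigma>) (\<sigma> + h)"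
      using V1[OF P] .
    have eq: "vb * \<rho>x (x0 + vb * \<sigma>) (\<sigma> + h) + \<rho>t (x0 + vb * \<sigma>) (\<sigma> + h) +
        a * (vb * vx (x0 + vb * \<sigma>) (\<sigma> + h) + vt (x0 + vb * \<sigma>) (\<sigma> + h)) = - a * k * v (x0 + vb * \<sigma>) (\<sigma> + h)"
      unfolding e1 e2 aeq by (simp add: algebra_simps)
    show ?thesis using DERIV_add[OF lr DERIV_cmult[OF lv, of a]] unfolding eq by (simp add: z_def)
  qed
  have zb0: "z 0 s = (a - c5) * v 0 s" if "s \<ge> 0" for s
    using bc0[OF that] by (simp add: z_def algebra_simps)
  define K0 where "K0 = exp(k*D/vb)"
  have K0: "K0 > 0" by (simp add: K0_def)
  define Cz where "Cz = (R + a*W) + \<bar>a - c5\<bar>*W + a*k*W*D/vb"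
  have zch: "((\<lambda>s. z (x - vb*t + vb * s) s) has_real_derivative - a * k * v (x - vb*t + vb*\<sigma>) \<sigma>)
          (at \<sigma> within {max 0 (t - x/vb)..t})"
      if "x \<in> {0..D}" "t \<ge> 0" "\<sigma> \<in> {max 0 (t - x/vb)..t}" for x t \<sigma>
    proof -
      have S: "\<And>s. s \<in> {max 0 (t - x/vb)..t} \<Longrightarrow> (x - vb*t + vb * s) \<in> {0..D} \<and> (s + 0) \<ge> 0"
        using char_pos[OF that(1) vb] by (simp only: add_0_right)
      show ?thesis using zchar[OF S that(3)] by (simp only: add_0_right mult_minus_left)
    qed
  have zgb: "\<bar>- a * k * v y \<sigma>\<bar> \<le> (a * k * W) * exp (- k * \<sigma>)" if "y \<in> {0..D}" "\<sigma> \<ge> 0" for y \<sigma>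
  proof -
    have "\<bar>- a * k * v y \<sigma>\<bar> = (a * k) * \<bar>v y \<sigma>\<bar>" using a0 k0 by (simp add: abs_mult)
    also have "\<dots> \<le> (a * k) * (W * exp (- k * \<sigma>))" using vbound[OF that] a0 k0 by (intro mult_left_mono) auto
    finally show ?thesis by (simp add: mult.assoc)
  qed
  have zbb: "\<bar>z 0 \<sigma>\<bar> \<le> (\<bar>a - c5\<bar> * W) * exp (- k * \<sigma>)" if "\<sigma> \<ge> 0" for \<sigma>
  proof -
    have "\<bar>z 0 \<sigma>\<bar> = \<bar>a - c5\<bar> * \<bar>v 0 \<sigma>\<bar>" using zb0[OF that] by (simp add: abs_mult)
    also have "\<dots> \<le> \<bar>a - c5\<bar> * (W * exp (- k * \<sigma>))" using vbound[OF D0 that] by (intro mult_left_mono) auto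
    finally show ?thesis by (simp add: mult.assoc)
  qed
  have zib: "\<bar>z y 0\<bar> \<le> R + a * W" if "y \<in> {0..D}" for y
  proof -
    have "\<bar>z y 0\<bar> \<le> \<bar>\<rho> y 0\<bar> + \<bar>a * v y 0\<bar>" by (simp add: z_def abs_triangle_ineq)
    also have "\<dots> = \<bar>\<rho> y 0\<bar> + a * \<bar>v y 0\<bar>" using a0 by (simp add: abs_mult)
    also have "\<dots> \<le> R + a * W" using Rb[OF that] Wb[OF that] a0 by (intro add_mono mult_left_mono) auto
    finally show ?thesis .
  qed
  have p1: "0 \<le> \<bar>a - c5\<bar> * W" "0 \<le> a*k*W" "0 \<le> R + a*W" using nn a0 k0 by auto
  have zbound: "\<bar>z x t\<bar> \<le> Cz * K0 * exp(-k*t)" if x: "x \<in> {0..D}" and t: "t \<ge> 0" for x t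
    using transport_bound[OF vb Dp k0 p1 zch zgb zbb zib x t] unfolding Cz_def K0_def by (simp only: mult.assoc)
  define Z1 where "Z1 = R1 + a * W1"
  have zlip0: "\<bar>z p 0 - z p' 0\<bar> \<le> Z1 * \<bar>p - p'\<bar>" if "p \<in> {0..D}" "p' \<in> {0..D}" for p p'
  proof (rule lip_on[OF _ _ that])
    fix y assume y: "y \<in> {0..D}"
    show "((\<lambda>y. z y 0) has_real_derivative \<rho>x y 0 + a * vx y 0) (at y within {0..D})"
      unfolding z_def by (rule DERIV_add[OF drx DERIV_cmult[OF dvx]]) (use y in auto)
    have "\<bar>\<rho>x y 0 + a * vx y 0\<bar> \<le> \<bar>\<rho>x y 0\<bar> + a * \<bar>vx y 0\<bar>"
      using a0 abs_triangle_ineq[of "\<rho>x y 0" "a * vx y 0"] by (simp add: abs_mult)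
    also have "\<dots> \<le> R1 + a * W1" using R1b[OF y] W1b[OF y] a0 by (intro add_mono mult_left_mono) auto
    finally show "\<bar>\<rho>x y 0 + a * vx y 0\<bar> \<le> Z1" by (simp add: Z1_def)
  qed
  have Z10: "Z1 \<ge> 0" using nn a0 by (simp add: Z1_def)
  define IE where "IE = a*k*W + Z1 * vb + \<bar>a - c5\<bar>*Vt"
  have zinit: "\<bar>z y h - z y 0\<bar> \<le> IE * h" if y: "y \<in> {0..D}" and h: "h > 0" for y h
  proof -
    define s0 where "s0 = max 0 (h - y/vb)"
    have s0: "0 \<le> s0" "s0 \<le> h" using y vb h by (auto simp: s0_def)
    have cp: "\<And>s. s \<in> {s0..h} \<Longrightarrow> (y - vb*h + vb * s) \<in> {0..D} \<and> (s + 0) \<ge> 0"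
      using char_pos[OF y vb] unfolding s0_def by (simp only: add_0_right)
    have m: "\<bar>z (y - vb*h + vb * h) (h + 0) - z (y - vb*h + vb * s0) (s0 + 0)\<bar> \<le> (a*k*W) * (h - s0)"
    proof (rule mvt_abs[OF s0(2)])
      fix \<sigma> assume sg: "\<sigma> \<in> {s0..h}"
      show "((\<lambda>s. z (y - vb*h + vb * s) (s + 0)) has_real_derivative - a * k * v (y - vb*h + vb * \<sigma>) (\<sigma> + 0)) (at \<sigma> within {s0..h})"
        by (rule zchar[OF cp sg])
      have "\<bar>- a * k * v (y - vb*h + vb * \<sigma>) (\<sigma> + 0)\<bar> \<le> (a * k * W) * exp (- k * (\<sigma> + 0))"
        using zgb cp[OF sg] by blast
      also have "\<dots> \<le> (a * k * W) * 1" using p1 sg s0 k0 by (intro mult_left_mono) auto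
      finally show "\<bar>- a * k * v (y - vb*h + vb * \<sigma>) (\<sigma> + 0)\<bar> \<le> a * k * W" by simp
    qed
    have m2: "(a*k*W) * (h - s0) \<le> (a*k*W) * h" using p1 s0 by (intro mult_left_mono) auto
    have Vh: "\<bar>a - c5\<bar>*Vt * h \<ge> 0" using Vt0 h by simp
    show ?thesis
    proof (cases "h \<le> y/vb")
      case True
      then have "s0 = 0" by (simp add: s0_def)
      then have 1: "\<bar>z y h - z (y - vb*h) 0\<bar> \<le> (a*k*W) * h" using m m2 by simp
      have yy: "y - vb*h \<in> {0..D}" using cp[of 0] s0 \<open>s0 = 0\<close> by simp
      have "\<bar>z (y - vb*h) 0 - z y 0\<bar> \<le> Z1 * \<bar>(y - vb*h) - y\<bar>" by (rule zlip0[OF yy y])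
      also have "\<dots> = Z1 * vb * h" using vb h by (simp add: abs_mult)
      finally have 2: "\<bar>z (y - vb*h) 0 - z y 0\<bar> \<le> Z1 * vb * h" .
      have "\<bar>z y h - z y 0\<bar> \<le> (a*k*W) * h + Z1 * vb * h" using 1 2 by linarith
      then show ?thesis using Vh unfolding IE_def by (simp add: algebra_simps)
    next
      case False
      then have s0e: "s0 = h - y/vb" by (simp add: s0_def)
      then have pt: "y - vb*h + vb * s0 = 0" using vb by (simp add: field_simps)
      have 1: "\<bar>z y h - z 0 s0\<bar> \<le> (a*k*W) * h" using m m2 pt by simp
      have "\<bar>z 0 s0 - z 0 0\<bar> = \<bar>a - c5\<bar> * \<bar>v 0 (0 + s0) - v 0 0\<bar>"
        using zb0[OF s0(1)] zb0[of 0] by (simp add: abs_mult right_diff_distrib[symmetric])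
      also have "\<dots> \<le> \<bar>a - c5\<bar> * (Vt * exp(-k*0) * s0)" using vtd[OF D0 order_refl s0(1)] by (intro mult_left_mono) auto
      also have "\<dots> \<le> \<bar>a - c5\<bar> * Vt * h" using s0 Vt0 by (simp add: mult_left_mono mult.assoc)
      finally have 2: "\<bar>z 0 s0 - z 0 0\<bar> \<le> \<bar>a - c5\<bar> * Vt * h" .
      have yl: "y \<le> vb * h" using False vb by (simp add: field_simps)
      have "\<bar>z 0 0 - z y 0\<bar> \<le> Z1 * \<bar>0 - y\<bar>" by (rule zlip0[OF D0 y])
      also have "\<dots> \<le> Z1 * (vb * h)" using y yl Z10 by (intro mult_left_mono) auto
      finally have 3: "\<bar>z 0 0 - z y 0\<bar> \<le> Z1 * (vb * h)" .
      have "\<bar>z y h - z y 0\<bar> \<le> (a*k*W) * h + \<bar>a - c5\<bar> * Vt * h + Z1 * (vb * h)" using 1 2 3 by linarith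
      then show ?thesis unfolding IE_def by (simp add: algebra_simps)
    qed
  qed
  define CE where "CE = IE + \<bar>a - c5\<bar>*Vt + a*k*Vt*D/vb"
  have IE0: "IE \<ge> 0" using nn a0 k0 Z10 vb Vt0 by (simp add: IE_def)
  have Ebound: "\<bar>(z x (t+h) - z x t)/h\<bar> \<le> CE * K0 * exp(-k*t)"
    if x: "x \<in> {0..D}" and t: "t \<ge> 0" and h: "h > 0" for x t h
  proof -
    define E where "E = (\<lambda>x t. (z x (t+h) - z x t)/h)"
    define G where "G = (\<lambda>y \<sigma>. (- a * k * v y (\<sigma> + h) - - a * k * v y (\<sigma> + 0)) / h)"
    have ech: "((\<lambda>s. E (x - vb*t + vb * s) s) has_real_derivative G (x - vb*t + vb*\<sigma>) \<sigma>)
          (at \<sigma> within {max 0 (t - x/vb)..t})"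
      if x': "x \<in> {0..D}" and "t \<ge> 0" and sg: "\<sigma> \<in> {max 0 (t - x/vb)..t}" for x t \<sigma>
    proof -
      have S1: "(x - vb*t + vb * s) \<in> {0..D} \<and> (s + h) \<ge> 0" if "s \<in> {max 0 (t - x/vb)..t}" for s
        using char_pos[OF x' vb that] h by auto
      have S0: "(x - vb*t + vb * s) \<in> {0..D} \<and> (s + 0) \<ge> 0" if "s \<in> {max 0 (t - x/vb)..t}" for s
        using char_pos[OF x' vb that] by auto
      have "((\<lambda>s. (z (x - vb*t + vb * s) (s + h) - z (x - vb*t + vb * s) (s + 0)) / h) has_real_derivative
          G (x - vb*t + vb*\<sigma>) \<sigma>) (at \<sigma> within {max 0 (t - x/vb)..t})"
        unfolding G_def by (rule DERIV_cdivide[OF DERIV_diff[OF zchar[OF S1 sg] zchar[OF S0 sg]]])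
      then show ?thesis by (simp only: E_def add_0_right)
    qed
    have egb: "\<bar>G y \<sigma>\<bar> \<le> (a * k * Vt) * exp (- k * \<sigma>)" if "y \<in> {0..D}" "\<sigma> \<ge> 0" for y \<sigma>
    proof -
      have "G y \<sigma> = (- (a * k)) * (v y (\<sigma> + h) - v y \<sigma>) / h" by (simp add: G_def algebra_simps)
      then have "\<bar>G y \<sigma>\<bar> = (a * k) * \<bar>v y (\<sigma> + h) - v y \<sigma>\<bar> / h" using a0 k0 h by (simp add: abs_mult abs_divide)
      also have "\<dots> \<le> (a * k) * (Vt * exp(-k*\<sigma>) * h) / h"
        using vtd[OF that less_imp_le[OF h]] a0 k0 h by (intro divide_right_mono mult_left_mono) auto
      also have "\<dots> = (a * k * Vt) * exp (- k * \<sigma>)" using h by simp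
      finally show ?thesis .
    qed
    have ebb: "\<bar>E 0 \<sigma>\<bar> \<le> (\<bar>a - c5\<bar> * Vt) * exp (- k * \<sigma>)" if "\<sigma> \<ge> 0" for \<sigma>
    proof -
      have "\<sigma> + h \<ge> 0" using that h by simp
      then have "E 0 \<sigma> = (a - c5) * (v 0 (\<sigma> + h) - v 0 \<sigma>) / h"
        using zb0[OF that] zb0[of "\<sigma> + h"] by (simp add: E_def algebra_simps)
      then have "\<bar>E 0 \<sigma>\<bar> = \<bar>a - c5\<bar> * \<bar>v 0 (\<sigma> + h) - v 0 \<sigma>\<bar> / h" using h by (simp add: abs_mult abs_divide)
      also have "\<dots> \<le> \<bar>a - c5\<bar> * (Vt * exp(-k*\<sigma>) * h) / h"
        using vtd[OF D0 that less_imp_le[OF h]] h by (intro divide_right_mono mult_left_mono) auto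
      also have "\<dots> = (\<bar>a - c5\<bar> * Vt) * exp (- k * \<sigma>)" using h by simp
      finally show ?thesis .
    qed
    have eib: "\<bar>E y 0\<bar> \<le> IE" if "y \<in> {0..D}" for y
    proof -
      have "\<bar>E y 0\<bar> = \<bar>z y h - z y 0\<bar> / h" using h by (simp add: E_def abs_divide)
      also have "\<dots> \<le> IE * h / h" using zinit[OF that h] h by (intro divide_right_mono) auto
      finally show ?thesis using h by simp
    qed
    have pp: "0 \<le> \<bar>a - c5\<bar> * Vt" "0 \<le> a * k * Vt" "0 \<le> IE" using Vt0 a0 k0 IE0 by auto
    have "\<bar>E x t\<bar> \<le> (IE + \<bar>a - c5\<bar> * Vt + a * k * Vt * D / vb) * exp (k * D / vb) * exp (- k * t)"
      by (rule transport_bound[OF vb Dp k0 pp ech egb ebb eib x t])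
    then show ?thesis unfolding E_def CE_def K0_def .
  qed
  have ztb: "\<bar>\<rho>t x t + a * vt x t\<bar> \<le> CE * K0 * exp(-k*t)" if x: "x \<in> {0..D}" and t: "t \<ge> 0" for x t
  proof -
    have d: "((\<lambda>s. z x s) has_real_derivative \<rho>t x t + a * vt x t) (at t within {t..})"
      unfolding z_def by (rule DERIV_subset[OF DERIV_add[OF drt DERIV_cmult[OF dvt]]]) (use x t in auto)
    show ?thesis
    proof (rule deriv_le_lip[OF d nb_Ici])
      fix y assume y: "y \<in> {t..}"
      show "\<bar>z x y - z x t\<bar> \<le> CE * K0 * exp (- k * t) * \<bar>y - t\<bar>"
      proof (cases "y = t")
        case False
        then have hp: "y - t > 0" using y by auto
        have "\<bar>(z x (t + (y - t)) - z x t) / (y - t)\<bar> \<le> CE * K0 * exp (- k * t)" by (rule Ebound[OF x t hp])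
        then have "\<bar>z x y - z x t\<bar> / (y - t) \<le> CE * K0 * exp (- k * t)" using hp by (simp add: abs_divide)
        then show ?thesis using hp by (simp add: divide_le_eq)
      qed simp
    qed
  qed
  define Ar where "Ar = Cz * K0 + a * W"
  define Art where "Art = CE * K0 + a * Vt"
  define Arx where "Arx = (Art + rb * W1) / vb"
  have rbd: "\<bar>\<rho> x t\<bar> \<le> Ar * exp(-k*t)" if "x \<in> {0..D}" "t \<ge> 0" for x t
  proof -
    have "\<rho> x t = z x t - a * v x t" by (simp add: z_def)
    then have "\<bar>\<rho> x t\<bar> \<le> \<bar>z x t\<bar> + a * \<bar>v x t\<bar>" using a0 abs_triangle_ineq4[of "z x t" "a * v x t"] by (simp add: abs_mult)
    also have "\<dots> \<le> Cz * K0 * exp(-k*t) + a * (W * exp(-k*t))"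
      using zbound[OF that] vbound[OF that] a0 by (intro add_mono mult_left_mono) auto
    finally show ?thesis by (simp add: Ar_def algebra_simps)
  qed
  have rtd: "\<bar>\<rho>t x t\<bar> \<le> Art * exp(-k*t)" if "x \<in> {0..D}" "t \<ge> 0" for x t
  proof -
    have "\<bar>\<rho>t x t\<bar> \<le> \<bar>\<rho>t x t + a * vt x t\<bar> + a * \<bar>vt x t\<bar>"
      using a0 abs_triangle_ineq4[of "\<rho>t x t + a * vt x t" "a * vt x t"] by (simp add: abs_mult)
    also have "\<dots> \<le> CE * K0 * exp(-k*t) + a * (Vt * exp(-k*t))"
      using ztb[OF that] vtb[OF that] a0 by (intro add_mono mult_left_mono) auto
    finally show ?thesis by (simp add: Art_def algebra_simps)
  qed
  have rxd: "\<bar>\<rho>x x t\<bar> \<le> Arx * exp(-k*t)" if "x \<in> {0..D}" "t \<ge> 0" for x t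
  proof -
    have "\<rho>x x t = - (\<rho>t x t + rb * vx x t) / vb" using pde1[OF that] vb by (simp add: field_simps)
    then have "\<bar>\<rho>x x t\<bar> = \<bar>\<rho>t x t + rb * vx x t\<bar> / vb" using vb by (simp add: abs_divide)
    also have "\<dots> \<le> (\<bar>\<rho>t x t\<bar> + rb * \<bar>vx x t\<bar>) / vb"
      using vb rb abs_triangle_ineq[of "\<rho>t x t" "rb * vx x t"] by (intro divide_right_mono) (auto simp: abs_mult)
    also have "\<dots> \<le> (Art * exp(-k*t) + rb * (W1 * exp(-k*t))) / vb"
      using rtd[OF that] vxb[OF that] vb rb by (intro divide_right_mono add_mono mult_left_mono) auto
    finally show ?thesis by (simp add: Arx_def algebra_simps add_divide_distrib)
  qed
  define Tot where "Tot = Ar + Arx + W + W1"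
  have ne: "{0..D} \<noteq> {}" using D0 by blast
  have Nt: "c1norm D (\<lambda>x. \<rho> x t) (\<lambda>x. \<rho>x x t) + c1norm D (\<lambda>x. v x t) (\<lambda>x. vx x t) \<le> Tot * exp(-k*t)"
    if t: "t \<ge> 0" for t
  proof -
    have "(SUP x\<in>{0..D}. \<bar>\<rho> x t\<bar>) \<le> Ar * exp(-k*t)" by (rule cSUP_least[OF ne]) (use rbd t in auto)
    moreover have "(SUP x\<in>{0..D}. \<bar>\<rho>x x t\<bar>) \<le> Arx * exp(-k*t)" by (rule cSUP_least[OF ne]) (use rxd t in auto)
    moreover have "(SUP x\<in>{0..D}. \<bar>v x t\<bar>) \<le> W * exp(-k*t)" by (rule cSUP_least[OF ne]) (use vbound t in auto)
    moreover have "(SUP x\<in>{0..D}. \<bar>vx x t\<bar>) \<le> W1 * exp(-k*t)" by (rule cSUP_least[OF ne]) (use vxb t in auto)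
    ultimately show ?thesis unfolding c1norm_def Tot_def by (simp add: algebra_simps)
  qed
  have Cz0: "Cz \<ge> 0" using nn a0 k0 vb Dp by (simp add: Cz_def)
  have CE0: "CE \<ge> 0" using IE0 Vt0 a0 k0 vb Dp by (simp add: CE_def)
  have Tot0: "Tot \<ge> 0" using Cz0 CE0 K0 a0 nn Vt0 rb vb
    by (simp add: Tot_def Ar_def Arx_def Art_def)
  define N0 where "N0 = R + R1 + (W + W1)"
  have N00: "N0 \<ge> 0" using nn by (simp add: N0_def)
  show ?thesis
  proof (cases "N0 = 0")
    case True
    then have z: "W = 0" "W1 = 0" "R = 0" "R1 = 0" using nn unfolding N0_def by linarith+
    then have "Tot = 0"
      by (simp add: Tot_def Ar_def Arx_def Art_def CE_def Cz_def IE_def Z1_def Vt_def)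
    then show ?thesis using Nt N0 True by (intro exI[of _ 1]) (simp add: N0_def)
  next
    case False
    then have Np: "N0 > 0" using N00 by simp
    show ?thesis
    proof (intro exI[of _ "Tot / N0 + 1"] conjI allI impI)
      show "Tot / N0 + 1 > 0" using Tot0 Np by (simp add: add_nonneg_pos)
      fix t :: real assume t: "t \<ge> 0"
      have "exp(-k*t) \<le> exp(-(k/2)*t)" using t k0 by (simp add: mult_right_mono)
      then have "Tot * exp(-k*t) \<le> Tot * exp(-(k/2)*t)" using Tot0 by (rule mult_left_mono)
      also have "\<dots> \<le> (Tot / N0 + 1) * N0 * exp(-(k/2)*t)"
      proof -
        have "(Tot / N0 + 1) * N0 = Tot + N0" using Np by (simp add: field_simps)
        then show ?thesis using Np by (simp add: mult_right_mono)
      qed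
      finally have calc: "Tot * exp(-k*t) \<le> (Tot / N0 + 1) * N0 * exp(-(k/2)*t)" .
      have eq: "c1norm D (\<lambda>x. \<rho> x 0) (\<lambda>x. \<rho>x x 0) + c1norm D (\<lambda>x. v x 0) (\<lambda>x. vx x 0) = N0"
        using N0 by (simp add: N0_def)
      show "c1norm D (\<lambda>x. \<rho> x t) (\<lambda>x. \<rho>x x t) + c1norm D (\<lambda>x. v x t) (\<lambda>x. vx x t)
           \<le> (Tot / N0 + 1) * (c1norm D (\<lambda>x. \<rho> x 0) (\<lambda>x. \<rho>x x 0) + c1norm D (\<lambda>x. v x 0) (\<lambda>x. vx x 0))
               * exp (- (k / 2) * t)"
        unfolding eq using calc Nt[OF t] by linarith
    qed
  qed
qed

end
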